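(* Let $\mathbf{a}=\{a_n\}_{n=1}^\infty$ be a linearly recurrent sequence of complex numbers with minimal polynomial $f(t)$. Then $$\max_{k\ge 0} \mathrm{GR}^{(k)}(\mathbf{a}) = M(f).$$
   Context: For a sequence $\mathbf{a}=\{a_n\}_{n\ge1}$ of complex numbers and an integer $k\ge1$, the $k$th growth rate is $$\mathrm{GR}^{(k)}(\mathbf{a})=\limsup_{n\to\infty}\left|\det H_{n,k}\right|^{1/n},$$ where $H_{n,k}$ is the $k\times k$ Hankel matrix whose $(i,j)$ entry ($0\le i,j\le k-1$) is $a_{n+i+j}$; and $\mathrm{GR}^{(0)}(\mathbf{a})=1$. A linear recurrence is a relation $a_{n+d}+c_{d-1}a_{n+d-1}+\cdots+c_0a_n=0$ for all $n$, with constant complex coefficients; its characteristic polynomial is $t^d+c_{d-1}t^{d-1}+\cdots+c_0$. A sequence is linearly recurrent if it satisfies some linear recurrence, and its minimal polynomial is the unique monic characteristic polynomial of minimal degree of a linear recurrence satisfied by it. The Mahler measure of a nonzero polynomial $f(x)=c_nx^n+\cdots+c_0\in\mathbb{C}[x]$ with $c_n\neq0$ and roots $r_1,\dots,r_n$ is $M(f)=|c_n|\prod_{j=1}^n\max(|r_j|,1)$. *)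

theory Defs
  imports Complex_Main "HOL-Library.Extended_Real" "HOL-Library.Liminf_Limsup"
    "HOL-Computational_Algebra.Polynomial" "Jordan_Normal_Form.Determinant"
begin

text \<open>Sequences a = (a_n) for n >= 1 are modelled as functions nat => complex;
  the value at index 0 is never used.\<close>

definition hankel :: "(nat \<Rightarrow> complex) \<Rightarrow> nat \<Rightarrow> nat \<Rightarrow> complex mat" where
  "hankel a n k = mat k k (\<lambda>(i,j). a (n + i + j))"

definition growth_rate :: "nat \<Rightarrow> (nat \<Rightarrow> complex) \<Rightarrow> ereal" where
  "growth_rate k a = (if k = 0 then 1 else
     limsup (\<lambda>n. ereal (cmod (det (hankel a n k)) powr (1 / real n))))"

definition satisfies_recurrence :: "complex poly \<Rightarrow> (nat \<Rightarrow> complex) \<Rightarrow> bool" where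
  "satisfies_recurrence p a \<longleftrightarrow> lead_coeff p = 1 \<and>
     (\<forall>n\<ge>1. (\<Sum>i\<le>degree p. coeff p i * a (n + i)) = 0)"

definition linearly_recurrent :: "(nat \<Rightarrow> complex) \<Rightarrow> bool" where
  "linearly_recurrent a \<longleftrightarrow> (\<exists>p. satisfies_recurrence p a)"

definition minimal_polynomial :: "(nat \<Rightarrow> complex) \<Rightarrow> complex poly \<Rightarrow> bool" where
  "minimal_polynomial a f \<longleftrightarrow> satisfies_recurrence f a \<and>
     (\<forall>p. satisfies_recurrence p a \<longrightarrow> degree f \<le> degree p)"

definition mahler_measure :: "complex poly \<Rightarrow> real" where
  "mahler_measure f = cmod (lead_coeff f) *
     (\<Prod>r\<in>{r. poly f r = 0}. max (cmod r) 1 ^ order r f)"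

end

theory Submission
  imports Defs "HOL-Library.FuncSet" "HOL-Computational_Algebra.Fundamental_Theorem_Algebra"
    "HOL-Real_Asymp.Real_Asymp" "HOL-Computational_Algebra.Field_as_Ring"
begin


definition appl :: "complex poly \<Rightarrow> (nat \<Rightarrow> complex) \<Rightarrow> nat \<Rightarrow> complex" where
  "appl p s n = (\<Sum>i\<le>degree p. coeff p i * s (n + i))"

lemma appl_le:
  assumes "degree p \<le> D"
  shows "appl p s n = (\<Sum>i\<le>D. coeff p i * s (n + i))"
  unfolding appl_def
  by (rule sum.mono_neutral_left) (use assms in \<open>auto simp: coeff_eq_0 not_le\<close>)

lemma appl_pCons: "appl (pCons c p) s n = c * s n + appl p s (Suc n)"
proof -
  have "appl (pCons c p) s n = (\<Sum>i\<le>Suc (degree p). coeff (pCons c p) i * s (n + i))"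
    by (rule appl_le) (simp add: degree_pCons_le)
  also have "\<dots> = c * s n + (\<Sum>i\<le>degree p. coeff p i * s (Suc n + i))"
    by (subst sum.atMost_Suc_shift) simp
  finally show ?thesis by (simp add: appl_def)
qed

lemma appl_0[simp]: "appl 0 s n = 0"
  by (simp add: appl_def)

lemma appl_const: "appl [:c:] s n = c * s n"
  by (simp add: appl_def)

lemma appl_1[simp]: "appl 1 s = s"
  by (rule ext) (simp add: appl_def)

lemma appl_add: "appl (p + q) s n = appl p s n + appl q s n"
proof -
  define D where "D = max (degree p) (degree q)"
  have "appl (p + q) s n = (\<Sum>i\<le>D. coeff (p+q) i * s (n + i))"
    by (rule appl_le) (simp add: D_def degree_add_le)
  also have "\<dots> = (\<Sum>i\<le>D. coeff p i * s (n + i)) + (\<Sum>i\<le>D. coeff q i * s (n + i))"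
    by (simp add: algebra_simps sum.distrib)
  also have "(\<Sum>i\<le>D. coeff p i * s (n + i)) = appl p s n"
    by (rule appl_le[symmetric]) (simp add: D_def)
  also have "(\<Sum>i\<le>D. coeff q i * s (n + i)) = appl q s n"
    by (rule appl_le[symmetric]) (simp add: D_def)
  finally show ?thesis .
qed

lemma appl_smult: "appl (smult c p) s n = c * appl p s n"
proof -
  have "appl (smult c p) s n = (\<Sum>i\<le>degree p. coeff (smult c p) i * s (n + i))"
    by (rule appl_le) simp
  thus ?thesis by (simp add: appl_def sum_distrib_left mult.assoc)
qed

lemma appl_lin: "appl p (\<lambda>n. u * s n + v * t n) n = u * appl p s n + v * appl p t n"
  by (simp add: appl_def sum.distrib sum_distrib_left algebra_simps)

lemma appl_add_seq: "appl p (\<lambda>n. s n + t n) n = appl p s n + appl p t n"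
  by (simp add: appl_def sum.distrib algebra_simps)

lemma appl_sum_seq: "appl p (\<lambda>n. \<Sum>r\<in>R. s r n) n = (\<Sum>r\<in>R. appl p (s r) n)"
  by (simp add: appl_def sum_distrib_left sum.swap[of _ R])

lemma appl_zero_seq[simp]: "appl p (\<lambda>n. 0) n = 0"
  by (simp add: appl_def)

lemma appl_mult: "appl (p * q) s n = appl p (appl q s) n"
proof (induction p arbitrary: n)
  case 0
  then show ?case by simp
next
  case (pCons c p)
  have "pCons c p * q = smult c q + pCons 0 (p * q)" by simp
  hence "appl (pCons c p * q) s n = c * appl q s n + appl (p * q) s (Suc n)"
    by (simp only: appl_add appl_smult appl_pCons) simp
  also have "\<dots> = appl (pCons c p) (appl q s) n"
    by (simp add: pCons.IH appl_pCons)
  finally show ?case .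
qed

lemma appl_comm: "appl p (appl q s) n = appl q (appl p s) n"
  by (metis appl_mult mult.commute)

lemma appl_dvd_zero:
  assumes "p dvd q" "\<And>n. appl p s n = 0"
  shows "appl q s n = 0"
proof -
  obtain r where "q = p * r" using assms(1) by blast
  hence "q = r * p" by simp
  hence "appl q s n = appl r (appl p s) n" by (simp add: appl_mult)
  also have "appl p s = (\<lambda>n. 0)" using assms(2) by auto
  finally show ?thesis by simp
qed

lemma appl_monom: "appl (monom c j) s n = c * s (n + j)"
proof -
  have "appl (monom c j) s n = (\<Sum>i\<le>j. coeff (monom c j) i * s (n + i))"
    by (rule appl_le) (simp add: degree_monom_le)
  also have "\<dots> = c * s (n + j)"
    by (subst sum.remove[of _ j]) (auto simp: coeff_monom)
  finally show ?thesis .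
qed

lemma appl_sum_poly: "appl (\<Sum>r\<in>R. p r) s n = (\<Sum>r\<in>R. appl (p r) s n)"
  by (induction R rule: infinite_finite_induct) (auto simp: appl_add)

lemma appl_mod:
  assumes "\<And>n. appl q s n = 0"
  shows "appl (p mod q) s n = appl p s n"
proof -
  have "p = p div q * q + p mod q" by simp
  hence "appl p s n = appl (p div q * q) s n + appl (p mod q) s n"
    by (metis appl_add)
  moreover have "appl q s = (\<lambda>n. 0)" using assms by auto
  hence "appl (p div q * q) s n = 0"
    by (simp add: appl_mult)
  ultimately show ?thesis by simp
qed

lemma appl_shift: "appl p (\<lambda>n. s (n + m)) n = appl p s (n + m)"
  by (simp add: appl_def algebra_simps)



lemma ge1_shift: "(\<forall>n\<ge>1. P n) \<longleftrightarrow> (\<forall>n. P (Suc n))"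
proof
  assume "\<forall>n\<ge>1. P n" thus "\<forall>n. P (Suc n)" by simp
next
  assume h: "\<forall>n. P (Suc n)"
  show "\<forall>n\<ge>1. P n"
  proof (intro allI impI)
    fix n :: nat assume "n \<ge> 1" then obtain m where "n = Suc m" by (cases n) auto
    thus "P n" using h by simp
  qed
qed

lemma sat_rec_iff:
  "satisfies_recurrence p a \<longleftrightarrow> lead_coeff p = 1 \<and> (\<forall>n. appl p (\<lambda>n. a (Suc n)) n = 0)"
  unfolding satisfies_recurrence_def appl_def ge1_shift by simp

lemma min_dvd:
  assumes "minimal_polynomial a f" "\<forall>n. appl p (\<lambda>n. a (Suc n)) n = 0" "p \<noteq> 0"
  shows "f dvd p"
proof (rule ccontr)
  let ?b = "\<lambda>n. a (Suc n)"
  have f: "lead_coeff f = 1" "\<forall>n. appl f ?b n = 0"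
    using assms(1) by (auto simp: minimal_polynomial_def sat_rec_iff)
  hence f0: "f \<noteq> 0" by auto
  define r where "r = p mod f"
  have r0: "\<forall>n. appl r ?b n = 0"
    using f assms(2) by (simp add: r_def appl_mod)
  assume "\<not> f dvd p"
  hence rnz: "r \<noteq> 0" by (simp add: r_def mod_eq_0_iff_dvd)
  define r' where "r' = smult (inverse (lead_coeff r)) r"
  have "lead_coeff r' = 1" using rnz by (simp add: r'_def)
  moreover have "\<forall>n. appl r' ?b n = 0" by (simp add: r'_def appl_smult r0)
  ultimately have "satisfies_recurrence r' a" by (simp add: sat_rec_iff)
  hence "degree f \<le> degree r'" using assms(1) by (auto simp: minimal_polynomial_def)
  moreover have "degree r' = degree r" using rnz by (simp add: r'_def)
  moreover have "degree r < degree f" using degree_mod_less'[of f p] rnz f0 unfolding r_def by blast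
  ultimately show False by simp
qed

lemma appl_lt:
  assumes "p = 0 \<or> degree p < D"
  shows "appl p s n = (\<Sum>i<D. coeff p i * s (n + i))"
  using assms
proof
  assume "p = 0" thus ?thesis by simp
next
  assume d: "degree p < D"
  show ?thesis unfolding appl_def
    by (rule sum.mono_neutral_left) (use d in \<open>auto simp: coeff_eq_0 not_le\<close>)
qed

lemma rep:
  assumes "lead_coeff q = 1" "\<forall>n. appl q s n = 0"
  shows "s (N + j) = (\<Sum>l<degree q. s (N + l) * coeff (monom 1 j mod q) l)"
proof -
  have q0: "q \<noteq> 0" using assms(1) by auto
  have "s (N + j) = appl (monom 1 j) s N" by (simp add: appl_monom)
  also have "\<dots> = appl (monom 1 j mod q) s N" using assms(2) by (simp add: appl_mod)
  also have "\<dots> = (\<Sum>l<degree q. coeff (monom 1 j mod q) l * s (N + l))"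
    by (rule appl_lt) (use q0 degree_mod_less' in blast)
  finally show ?thesis by (simp add: mult.commute)
qed

lemma growth:
  assumes "\<forall>n. appl ([:-\<alpha>,1:]^m) s n = 0"
  shows "\<exists>K\<ge>0. \<forall>n. cmod (s n) \<le> K * (real n + 1)^m * (max (cmod \<alpha>) 1)^n"
  using assms
proof (induction m arbitrary: s)
  case 0
  hence "\<forall>n. s n = 0" by (simp add: fun_eq_iff)
  thus ?case by auto
next
  case (Suc m)
  define \<rho> where "\<rho> = max (cmod \<alpha>) 1"
  have \<rho>1: "\<rho> \<ge> 1" by (simp add: \<rho>_def)
  define s' where "s' = appl [:-\<alpha>,1:] s"
  have "\<forall>n. appl ([:-\<alpha>,1:]^m) s' n = 0"
    using Suc.prems by (simp add: s'_def appl_mult[symmetric] power_Suc2)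
  from Suc.IH[OF this] obtain K where K: "K \<ge> 0" "\<forall>n. cmod (s' n) \<le> K * (real n + 1)^m * \<rho>^n"
    by (auto simp: \<rho>_def)
  have ss: "s (Suc n) = s' n + \<alpha> * s n" for n
    by (simp add: s'_def appl_pCons appl_const)
  define K' where "K' = max K (cmod (s 0))"
  have K': "K' \<ge> 0" "K \<le> K'" using K(1) by (auto simp: K'_def le_max_iff_disj)
  have "cmod (s n) \<le> K' * (real n + 1)^(Suc m) * \<rho>^n" for n
  proof (induction n)
    case 0
    then show ?case by (simp add: K'_def)
  next
    case (Suc n)
    have h1: "cmod (s (Suc n)) \<le> cmod (s' n) + cmod \<alpha> * cmod (s n)"
      by (metis ss norm_mult norm_triangle_ineq)
    have "cmod (s' n) \<le> K * (real n + 1)^m * \<rho>^n" using K by auto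
    also have "\<dots> \<le> K' * (real n + 1)^m * \<rho>^(Suc n)"
      using K' K \<rho>1 by (intro mult_mono) auto
    finally have h2: "cmod (s' n) \<le> K' * (real n + 1)^m * \<rho>^(Suc n)" .
    have "cmod \<alpha> * cmod (s n) \<le> \<rho> * (K' * (real n + 1)^(Suc m) * \<rho>^n)"
      using Suc.IH \<rho>1 by (intro mult_mono) (auto simp: \<rho>_def)
    hence h3: "cmod \<alpha> * cmod (s n) \<le> K' * (real n + 1)^(Suc m) * \<rho>^(Suc n)"
      by (simp add: algebra_simps)
    have h4: "(real n + 1)^m + (real n + 1)^(Suc m) \<le> (real (Suc n) + 1)^(Suc m)"
    proof -
      have "(real n + 1)^m + (real n + 1)^(Suc m) = (real n + 2) * (real n + 1)^m"
        by (simp add: algebra_simps)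
      also have "\<dots> \<le> (real n + 2) * (real n + 2)^m"
        by (intro mult_left_mono power_mono) auto
      finally show ?thesis by (simp add: add.commute)
    qed
    have "cmod (s (Suc n)) \<le> K' * \<rho>^(Suc n) * ((real n + 1)^m + (real n + 1)^(Suc m))"
      using h1 h2 h3 by (simp add: algebra_simps)
    also have "\<dots> \<le> K' * \<rho>^(Suc n) * (real (Suc n) + 1)^(Suc m)"
      using h4 K' \<rho>1 by (intro mult_left_mono) auto
    finally show ?case by (simp add: algebra_simps)
  qed
  thus ?case using K' by (auto simp: \<rho>_def)
qed

lemma coprime_lin:
  fixes \<alpha> \<beta> :: complex
  assumes "\<alpha> \<noteq> \<beta>"
  shows "coprime ([:-\<alpha>,1:]^m) ([:-\<beta>,1:]^n)"
proof -
  have "coprime [:-\<alpha>,1:] [:-\<beta>,1:]"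
  proof (rule coprimeI)
    fix c assume "c dvd [:-\<alpha>,1:]" "c dvd [:-\<beta>,1:]"
    hence "c dvd [:-\<alpha>,1:] - [:-\<beta>,1:]" by (rule dvd_diff)
    moreover have "[:-\<alpha>,1:] - [:-\<beta>,1:] = [:\<beta> - \<alpha>:]" by simp
    moreover have "is_unit [:\<beta> - \<alpha>:]" using assms by (auto simp: is_unit_const_poly_iff dvd_field_iff)
    ultimately show "is_unit c" using dvd_unit_imp_unit by metis
  qed
  thus ?thesis by (simp add: coprime_power_left_iff coprime_power_right_iff)
qed

lemma decomp:
  assumes "finite R" "\<forall>r\<in>R. \<forall>r'\<in>R. r \<noteq> r' \<longrightarrow> coprime (P r) (P r')"
    "\<forall>n. appl (\<Prod>r\<in>R. P r) s n = 0"
  shows "\<exists>comp. (\<forall>r\<in>R. \<forall>n. appl (P r) (comp r) n = 0) \<and> (\<forall>n. s n = (\<Sum>r\<in>R. comp r n))"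
  using assms
proof (induction R arbitrary: s rule: finite_induct)
  case empty
  thus ?case by (simp add: fun_eq_iff)
next
  case (insert r R)
  define Q where "Q = (\<Prod>r\<in>R. P r)"
  have cop: "coprime (P r) Q" unfolding Q_def
    using insert by (intro prod_coprime_right) auto
  define u where "u = fst (bezout_coefficients (P r) Q)"
  define v where "v = snd (bezout_coefficients (P r) Q)"
  have uv: "u * P r + v * Q = 1"
    using bezout_coefficients_fst_snd[of "P r" Q] cop by (simp add: u_def v_def coprime_iff_gcd_eq_1)
  have PQ: "\<forall>n. appl (P r * Q) s n = 0" using insert by (simp add: Q_def)
  define s1 where "s1 = appl (v * Q) s"
  define s2 where "s2 = appl (u * P r) s"
  have sum: "s n = s1 n + s2 n" for n
  proof -
    have "s n = appl (u * P r + v * Q) s n" by (simp add: uv)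
    thus ?thesis by (simp add: appl_add s1_def s2_def)
  qed
  have e1: "P r * (v * Q) = (P r * Q) * v" by (simp add: ac_simps)
  have e2: "Q * (u * P r) = (P r * Q) * u" by (simp add: ac_simps)
  have s1: "appl (P r) s1 n = 0" for n
    unfolding s1_def appl_mult[symmetric] e1
    by (rule appl_dvd_zero[of "P r * Q"]) (use PQ in auto)
  have s2: "\<forall>n. appl Q s2 n = 0"
    unfolding s2_def appl_mult[symmetric] e2
    by (intro allI, rule appl_dvd_zero[of "P r * Q"]) (use PQ in auto)
  from insert.IH[of s2] insert.prems s2 obtain comp where
    comp: "\<forall>r\<in>R. \<forall>n. appl (P r) (comp r) n = 0" "\<forall>n. s2 n = (\<Sum>r\<in>R. comp r n)"
    by (auto simp: Q_def)
  define comp' where "comp' = comp(r := s1)"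
  have "(\<Sum>r'\<in>R. comp' r' n) = (\<Sum>r'\<in>R. comp r' n)" for n
    using insert.hyps by (intro sum.cong) (auto simp: comp'_def)
  hence "\<forall>n. s n = (\<Sum>r\<in>insert r R. comp' r n)"
    using insert.hyps comp sum by (simp add: comp'_def)
  moreover have "\<forall>r'\<in>insert r R. \<forall>n. appl (P r') (comp' r') n = 0"
    using comp s1 by (auto simp: comp'_def)
  ultimately show ?case by blast
qed



lemma det_mat_eq:
  "det (mat k k F) = (\<Sum>p\<in>{p. p permutes {0..<k}}. signof p * (\<Prod>i=0..<k. F (i, p i)))"
proof -
  have "det (mat k k F) = (\<Sum>p\<in>{p. p permutes {0..<k}}. signof p * (\<Prod>i=0..<k. mat k k F $$ (i, p i)))"
    by (rule det_def') simp
  also have "\<dots> = (\<Sum>p\<in>{p. p permutes {0..<k}}. signof p * (\<Prod>i=0..<k. F (i, p i)))"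
    by (intro sum.cong refl arg_cong2[where f="(*)"] prod.cong) (auto simp: permutes_in_image)
  finally show ?thesis .
qed

lemma det_expand:
  fixes c w :: "'x \<Rightarrow> nat \<Rightarrow> complex"
  assumes "finite X"
  shows "det (mat k k (\<lambda>(i,j). \<Sum>x\<in>X. c x i * w x j)) =
    (\<Sum>\<tau>\<in>{0..<k} \<rightarrow>\<^sub>E X. (\<Prod>i=0..<k. c (\<tau> i) i) * det (mat k k (\<lambda>(i,j). w (\<tau> i) j)))"
proof -
  let ?P = "{p. p permutes {0..<k}}"
  let ?T = "{0..<k} \<rightarrow>\<^sub>E X"
  have "det (mat k k (\<lambda>(i,j). \<Sum>x\<in>X. c x i * w x j)) =
     (\<Sum>p\<in>?P. signof p * (\<Prod>i=0..<k. \<Sum>x\<in>X. c x i * w x (p i)))"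
    by (simp add: det_mat_eq)
  also have "\<dots> = (\<Sum>p\<in>?P. signof p * (\<Sum>\<tau>\<in>?T. \<Prod>i=0..<k. c (\<tau> i) i * w (\<tau> i) (p i)))"
    using assms by (simp add: prod_sum_PiE)
  also have "\<dots> = (\<Sum>p\<in>?P. \<Sum>\<tau>\<in>?T. (\<Prod>i=0..<k. c (\<tau> i) i) * (signof p * (\<Prod>i=0..<k. w (\<tau> i) (p i))))"
    by (simp add: sum_distrib_left prod.distrib algebra_simps)
  also have "\<dots> = (\<Sum>\<tau>\<in>?T. \<Sum>p\<in>?P. (\<Prod>i=0..<k. c (\<tau> i) i) * (signof p * (\<Prod>i=0..<k. w (\<tau> i) (p i))))"
    by (rule sum.swap)
  also have "\<dots> = (\<Sum>\<tau>\<in>?T. (\<Prod>i=0..<k. c (\<tau> i) i) * det (mat k k (\<lambda>(i,j). w (\<tau> i) j)))"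
    by (simp add: det_mat_eq sum_distrib_left)
  finally show ?thesis .
qed

lemma det_noninj:
  assumes "\<not> inj_on \<tau> {0..<k}"
  shows "det (mat k k (\<lambda>(i,j). w (\<tau> i) j)) = (0::complex)"
proof -
  from assms obtain i j where ij: "i < k" "j < k" "i \<noteq> j" "\<tau> i = \<tau> j"
    by (auto simp: inj_on_def)
  show ?thesis
    by (rule det_identical_rows[of _ k i j]) (use ij in \<open>auto intro!: eq_vecI\<close>)
qed

lemma companion_det:
  fixes g :: "complex poly"
  assumes "k > 0"
  shows "cmod (det (mat k k (\<lambda>(i,j). if i + 1 < k then (if j = i + 1 then 1 else 0) else - coeff g j)))
         = cmod (coeff g 0)"
proof -
  define Cm where "Cm = mat k k (\<lambda>(i,j). if i + 1 < k then (if j = i + 1 then 1 else 0) else - coeff g j :: complex)"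
  obtain k' where k': "k = Suc k'" using assms by (cases k) auto
  have C: "Cm \<in> carrier_mat k k" by (simp add: Cm_def)
  have "det Cm = (\<Sum>i<k. Cm $$ (i,0) * cofactor Cm i 0)"
    by (rule laplace_expansion_column[OF C]) (use assms in auto)
  also have "\<dots> = Cm $$ (k',0) * cofactor Cm k' 0"
    unfolding k' lessThan_Suc by (subst sum.insert) (auto simp: Cm_def k')
  also have "mat_delete Cm k' 0 = 1\<^sub>m k'"
    by (rule eq_matI) (auto simp: Cm_def mat_delete_def k')
  hence "cofactor Cm k' 0 = (-1)^k'"
    by (simp add: cofactor_def)
  finally have "det Cm = Cm $$ (k',0) * (-1)^k'" .
  moreover have "Cm $$ (k',0) = - coeff g 0" by (simp add: Cm_def k')
  ultimately have "cmod (det Cm) = cmod (coeff g 0)" by (simp add: norm_mult norm_power)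
  thus ?thesis by (simp only: Cm_def)
qed

lemma hankel_step:
  fixes g :: "complex poly"
  assumes "lead_coeff g = 1" "degree g = k" "\<forall>n. appl g s n = 0"
  shows "mat k k (\<lambda>(i,j). s (Suc N + i + j)) =
    mat k k (\<lambda>(i,j). if i + 1 < k then (if j = i + 1 then 1 else 0) else - coeff g j) * mat k k (\<lambda>(i,j). s (N + i + j))"
  (is "?L = ?C * ?H")
proof (rule eq_matI)
  fix i j assume ij: "i < dim_row (?C * ?H)" "j < dim_col (?C * ?H)"
  hence ik: "i < k" "j < k" by auto
  have "(?C * ?H) $$ (i,j) = (\<Sum>l = 0..<k. ?C $$ (i,l) * ?H $$ (l,j))"
    using ij by (simp add: scalar_prod_def)
  also have "\<dots> = (\<Sum>l = 0..<k. (if i + 1 < k then (if l = i + 1 then 1 else 0) else - coeff g l) * s (N + l + j))"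
    using ik by (intro sum.cong refl arg_cong2[where f="(*)"]) simp_all
  also have "\<dots> = s (Suc N + i + j)"
  proof (cases "i + 1 < k")
    case True
    have "(\<Sum>l = 0..<k. (if i + 1 < k then (if l = i + 1 then 1 else 0) else - coeff g l) * s (N + l + j))
        = (\<Sum>l = 0..<k. (if l = i + 1 then s (N + l + j) else 0))"
      by (intro sum.cong refl) (simp only: if_P[OF True], simp)
    also have "\<dots> = s (N + (i + 1) + j)"
      by (subst sum.delta) (use True in auto)
    finally show ?thesis by simp
  next
    case False
    hence i: "i = k - 1" using ik by auto
    have "0 = appl g s (N + j)" using assms by simp
    also have "\<dots> = (\<Sum>l<Suc k. coeff g l * s (N + j + l))"
      using assms(2) by (subst appl_le[of _ k]) (auto simp: lessThan_Suc_atMost)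
    also have "\<dots> = (\<Sum>l<k. coeff g l * s (N + l + j)) + s (N + j + k)"
      using assms by (simp add: algebra_simps)
    finally have "s (N + j + k) = - (\<Sum>l<k. coeff g l * s (N + l + j))"
      by (simp add: eq_neg_iff_add_eq_0 add.commute)
    note sk = this
    have eq: "Suc N + i + j = N + j + k" using i ik by simp
    have "(\<Sum>l = 0..<k. (if i + 1 < k then (if l = i + 1 then 1 else 0) else - coeff g l) * s (N + l + j))
       = (\<Sum>l = 0..<k. - (coeff g l * s (N + l + j)))"
      by (intro sum.cong refl) (simp only: if_not_P[OF False], simp)
    also have "\<dots> = - (\<Sum>l<k. coeff g l * s (N + l + j))"
      by (simp add: atLeast0LessThan sum_negf)
    also have "\<dots> = s (N + j + k)" using sk by simp
    also have "\<dots> = s (Suc N + i + j)" by (simp only: eq)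
    finally show ?thesis .
  qed
  finally show "?L $$ (i,j) = (?C * ?H) $$ (i,j)" using ik by simp
qed auto

lemma hankel_det_power:
  fixes g :: "complex poly"
  assumes "lead_coeff g = 1" "degree g = k" "\<forall>n. appl g s n = 0" "k > 0"
  shows "cmod (det (mat k k (\<lambda>(i,j). s (N + i + j)))) =
         cmod (coeff g 0) ^ N * cmod (det (mat k k (\<lambda>(i,j). s (i + j))))"
proof (induction N)
  case 0
  then show ?case by simp
next
  case (Suc N)
  let ?C = "mat k k (\<lambda>(i,j). if i + 1 < k then (if j = i + 1 then 1 else 0) else - coeff g j)"
  have "det (mat k k (\<lambda>(i,j). s (Suc N + i + j))) = det ?C * det (mat k k (\<lambda>(i,j). s (N + i + j)))"
    by (subst hankel_step[OF assms(1-3)]) (rule det_mult, auto)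
  thus ?case using Suc companion_det[OF assms(4), of g] by (simp add: norm_mult)
qed



lemma hankel_rep:
  fixes c w :: "'x \<Rightarrow> nat \<Rightarrow> complex"
  assumes "finite X" "\<And>i j. s (N + i + j) = (\<Sum>x\<in>X. c x (N + i) * w x j)"
  shows "det (mat k k (\<lambda>(i,j). s (N + i + j))) =
    (\<Sum>\<tau>\<in>{0..<k} \<rightarrow>\<^sub>E X. (\<Prod>i=0..<k. c (\<tau> i) (N + i)) * det (mat k k (\<lambda>(i,j). w (\<tau> i) j)))"
proof -
  have "mat k k (\<lambda>(i,j). s (N + i + j)) = mat k k (\<lambda>(i,j). \<Sum>x\<in>X. (\<lambda>x i. c x (N + i)) x i * w x j)"
    using assms(2) by (intro cong_mat) auto
  thus ?thesis using det_expand[OF assms(1), where c="\<lambda>x i. c x (N + i)" and w=w and k=k] by simp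
qed

lemma prod_le_total:
  fixes \<rho> :: "'x \<Rightarrow> real"
  assumes "finite X" "S \<subseteq> X" "\<forall>x\<in>X. \<rho> x \<ge> 1"
  shows "(\<Prod>x\<in>S. \<rho> x) \<le> (\<Prod>x\<in>X. \<rho> x)"
proof -
  have "(\<Prod>x\<in>X. \<rho> x) = (\<Prod>x\<in>X - S. \<rho> x) * (\<Prod>x\<in>S. \<rho> x)"
    using assms by (simp add: prod.subset_diff)
  moreover have "(\<Prod>x\<in>X - S. \<rho> x) \<ge> 1" using assms by (intro prod_ge_1) auto
  moreover have "(\<Prod>x\<in>S. \<rho> x) \<ge> 0" using assms by (intro prod_nonneg) force
  ultimately show ?thesis by (metis mult_le_cancel_right1 order.strict_iff_not)
qed

lemma prod_inj_le:
  fixes \<rho> :: "'x \<Rightarrow> real"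
  assumes "finite X" "\<tau> \<in> {0..<k} \<rightarrow>\<^sub>E X" "inj_on \<tau> {0..<k}" "\<forall>x\<in>X. \<rho> x \<ge> 1"
  shows "(\<Prod>i=0..<k. \<rho> (\<tau> i)) \<le> (\<Prod>x\<in>X. \<rho> x)"
proof -
  have "(\<Prod>i=0..<k. \<rho> (\<tau> i)) = (\<Prod>x\<in>\<tau> ` {0..<k}. \<rho> x)"
    using assms(3) by (simp add: prod.reindex)
  also have "\<dots> \<le> (\<Prod>x\<in>X. \<rho> x)"
    using assms by (intro prod_le_total) auto
  finally show ?thesis .
qed

lemma prod_inj_le_strict:
  fixes \<rho> :: "'x \<Rightarrow> real"
  assumes "finite X" "Xo \<subseteq> X" "\<tau> \<in> {0..<k} \<rightarrow>\<^sub>E X" "inj_on \<tau> {0..<k}"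
    "\<forall>x\<in>X - Xo. \<rho> x = 1" "\<forall>x\<in>Xo. \<rho> x \<ge> \<mu>" "\<mu> \<ge> 1" "card Xo = k" "\<tau> \<notin> {0..<k} \<rightarrow>\<^sub>E Xo"
  shows "\<mu> * (\<Prod>i=0..<k. \<rho> (\<tau> i)) \<le> (\<Prod>x\<in>Xo. \<rho> x)"
proof -
  define S where "S = \<tau> ` {0..<k}"
  have fin: "finite Xo" using assms(1,2) finite_subset by blast
  have SX: "S \<subseteq> X" using assms(3) by (auto simp: S_def)
  have cardS: "card S = k" using assms(4) by (simp add: S_def card_image)
  have "(\<Prod>i=0..<k. \<rho> (\<tau> i)) = (\<Prod>x\<in>S. \<rho> x)"
    using assms(4) by (simp add: prod.reindex S_def)
  also have "\<dots> = (\<Prod>x\<in>S \<inter> Xo. \<rho> x)"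
    using SX assms(1,5) finite_subset
    by (intro prod.mono_neutral_right) auto
  finally have eq: "(\<Prod>i=0..<k. \<rho> (\<tau> i)) = (\<Prod>x\<in>S \<inter> Xo. \<rho> x)" .
  have "\<not> S \<subseteq> Xo"
  proof
    assume "S \<subseteq> Xo"
    hence "\<tau> \<in> {0..<k} \<rightarrow>\<^sub>E Xo" using assms(3) by (auto simp: S_def PiE_def Pi_def)
    thus False using assms(9) by simp
  qed
  hence "S \<inter> Xo \<subset> S" by auto
  hence "card (S \<inter> Xo) < k" using cardS finite_subset SX assms(1)
    by (metis psubset_card_mono)
  hence "\<not> Xo \<subseteq> S \<inter> Xo" using assms(8) fin
    by (metis card_mono finite_Int leD)
  then obtain x0 where x0: "x0 \<in> Xo" "x0 \<notin> S" by auto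
  have ge1: "\<forall>x\<in>Xo. \<rho> x \<ge> 1" using assms(6,7) by force
  have "(\<Prod>x\<in>Xo. \<rho> x) = \<rho> x0 * (\<Prod>x\<in>Xo - {x0}. \<rho> x)"
    using fin x0 by (simp add: prod.remove)
  also have "(\<Prod>x\<in>Xo - {x0}. \<rho> x) \<ge> (\<Prod>x\<in>S \<inter> Xo. \<rho> x)"
    using x0 fin ge1 by (intro prod_le_total) auto
  hence "\<rho> x0 * (\<Prod>x\<in>Xo - {x0}. \<rho> x) \<ge> \<mu> * (\<Prod>x\<in>S \<inter> Xo. \<rho> x)"
    using assms(6,7) x0 ge1 by (intro mult_mono) (auto intro!: prod_nonneg)
  finally show ?thesis using eq by simp
qed

lemma det_bound:
  fixes c w :: "'x \<Rightarrow> nat \<Rightarrow> complex" and \<rho> :: "'x \<Rightarrow> real"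
  assumes "finite X" "K \<ge> 0" "\<forall>x\<in>X. \<forall>N. cmod (c x N) \<le> K * (real N + 1)^D * \<rho> x ^ N"
    "\<forall>x\<in>X. 1 \<le> \<rho> x \<and> \<rho> x \<le> B" "Q \<ge> 0"
    "Y \<subseteq> {0..<k} \<rightarrow>\<^sub>E X"
    "\<forall>\<tau>\<in>Y. inj_on \<tau> {0..<k} \<longrightarrow> (\<Prod>i=0..<k. \<rho> (\<tau> i)) \<le> Q" "B \<ge> 1"
  shows "cmod (\<Sum>\<tau>\<in>Y. (\<Prod>i=0..<k. c (\<tau> i) (N + i)) * det (mat k k (\<lambda>(i,j). w (\<tau> i) j)))
     \<le> (K * B^k)^k * (real N + real k)^(D*k) * Q^N *
        (\<Sum>\<tau>\<in>{0..<k} \<rightarrow>\<^sub>E X. cmod (det (mat k k (\<lambda>(i,j). w (\<tau> i) j))))"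
proof -
  let ?W = "\<lambda>\<tau>. cmod (det (mat k k (\<lambda>(i,j). w (\<tau> i) j)))"
  let ?A = "(K * B^k)^k * (real N + real k)^(D*k) * Q^N"
  have fin: "finite ({0..<k} \<rightarrow>\<^sub>E X)" using assms(1) by (simp add: finite_PiE)
  have trm: "cmod ((\<Prod>i=0..<k. c (\<tau> i) (N + i)) * det (mat k k (\<lambda>(i,j). w (\<tau> i) j))) \<le> ?A * ?W \<tau>"
    if \<tau>: "\<tau> \<in> Y" for \<tau>
  proof (cases "inj_on \<tau> {0..<k}")
    case False
    thus ?thesis using det_noninj[OF False] assms(2,5)
      by (simp add: zero_le_mult_iff)
  next
    case True
    have \<tau>X: "\<tau> \<in> {0..<k} \<rightarrow>\<^sub>E X" using \<tau> assms(6) by auto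
    have fac: "cmod (c (\<tau> i) (N + i)) \<le> (K * B^k * (real N + real k)^D) * \<rho> (\<tau> i) ^ N" if i: "i < k" for i
    proof -
      have x: "\<tau> i \<in> X" using \<tau>X i by auto
      hence r: "1 \<le> \<rho> (\<tau> i)" "\<rho> (\<tau> i) \<le> B" using assms(4) by auto
      hence B1': "B \<ge> 1" by simp
      have "cmod (c (\<tau> i) (N + i)) \<le> K * (real (N + i) + 1)^D * \<rho> (\<tau> i) ^ (N + i)"
        using assms(3) x by blast
      also have "\<dots> = K * (real (N + i) + 1)^D * \<rho> (\<tau> i) ^ i * \<rho> (\<tau> i) ^ N"
        by (simp add: power_add)
      also have "\<dots> \<le> K * (real N + real k)^D * B ^ k * \<rho> (\<tau> i) ^ N"
      proof -
        have "(real (N + i) + 1)^D \<le> (real N + real k)^D" using i by (intro power_mono) auto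
        moreover have "\<rho> (\<tau> i) ^ i \<le> B ^ k"
        proof -
          have "\<rho> (\<tau> i) ^ i \<le> B ^ i" using r by (intro power_mono) auto
          also have "\<dots> \<le> B ^ k" using B1' i by (intro power_increasing) auto
          finally show ?thesis .
        qed
        ultimately show ?thesis using assms(2) r
          by (intro mult_right_mono mult_mono mult_left_mono) auto
      qed
      finally show ?thesis by (simp add: algebra_simps)
    qed
    have "cmod (\<Prod>i=0..<k. c (\<tau> i) (N + i)) = (\<Prod>i=0..<k. cmod (c (\<tau> i) (N + i)))"
      by (simp add: prod_norm)
    also have "\<dots> \<le> (\<Prod>i=0..<k. (K * B^k * (real N + real k)^D) * \<rho> (\<tau> i) ^ N)"
      using fac by (intro prod_mono) auto
    also have "\<dots> = (K * B^k * (real N + real k)^D)^k * (\<Prod>i=0..<k. \<rho> (\<tau> i)) ^ N"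
      by (simp add: prod.distrib prod_power_distrib)
    also have "\<dots> \<le> (K * B^k * (real N + real k)^D)^k * Q ^ N"
    proof -
      have "0 \<le> (\<Prod>i=0..<k. \<rho> (\<tau> i))"
        using \<tau>X assms(4) by (intro prod_nonneg) (force simp: PiE_def Pi_def)
      thus ?thesis using True \<tau> assms(2,7,8) by (intro mult_left_mono power_mono) auto
    qed
    also have "\<dots> = ?A" by (simp add: power_mult_distrib power_mult mult.commute)
    finally show ?thesis
      by (simp add: norm_mult mult_right_mono)
  qed
  have "cmod (\<Sum>\<tau>\<in>Y. (\<Prod>i=0..<k. c (\<tau> i) (N + i)) * det (mat k k (\<lambda>(i,j). w (\<tau> i) j)))
     \<le> (\<Sum>\<tau>\<in>Y. cmod ((\<Prod>i=0..<k. c (\<tau> i) (N + i)) * det (mat k k (\<lambda>(i,j). w (\<tau> i) j))))"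
    by (rule norm_sum)
  also have "\<dots> \<le> (\<Sum>\<tau>\<in>Y. ?A * ?W \<tau>)"
    using trm by (intro sum_mono) auto
  also have "\<dots> = ?A * (\<Sum>\<tau>\<in>Y. ?W \<tau>)" by (simp add: sum_distrib_left)
  also have "\<dots> \<le> ?A * (\<Sum>\<tau>\<in>{0..<k} \<rightarrow>\<^sub>E X. ?W \<tau>)"
  proof (rule mult_left_mono)
    show "(\<Sum>\<tau>\<in>Y. ?W \<tau>) \<le> (\<Sum>\<tau>\<in>{0..<k} \<rightarrow>\<^sub>E X. ?W \<tau>)"
      using assms(6) fin by (intro sum_mono2) auto
    show "0 \<le> ?A" using assms(2,5,8) by (auto intro!: mult_nonneg_nonneg)
  qed
  finally show ?thesis .
qed



lemma hankel0_nonzero: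
  fixes g h :: "complex poly"
  assumes minp: "minimal_polynomial a f" and fgh: "f = g * h" and g1: "lead_coeff g = 1"
    and dg: "degree g = k" and gbo: "\<forall>n. appl g bo n = 0" and hbi: "\<forall>n. appl h bi n = 0"
    and ab: "\<forall>n. a (Suc n) = bo n + bi n" and h0: "h \<noteq> 0"
  shows "det (mat k k (\<lambda>(i,j). bo (i + j))) \<noteq> 0"
proof
  let ?H = "mat k k (\<lambda>(i,j). bo (i + j))"
  assume "det ?H = 0"
  then obtain v where v: "v \<in> carrier_vec k" "v \<noteq> 0\<^sub>v k" "?H *\<^sub>v v = 0\<^sub>v k"
    using det_0_iff_vec_prod_zero[of ?H k] by auto
  define q where "q = (\<Sum>j<k. monom (v $ j) j)"
  have cq: "coeff q l = (if l < k then v $ l else 0)" for l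
    by (simp add: q_def coeff_sum coeff_monom)
  obtain j0 where j0: "j0 < k" "v $ j0 \<noteq> 0"
    using v(1,2) by (metis carrier_vecD eq_vecI index_zero_vec(1,2))
  have q0: "q \<noteq> 0"
  proof
    assume "q = 0" hence "coeff q j0 = 0" by simp
    thus False using cq j0 by simp
  qed
  have dq: "degree q < k"
  proof -
    have "degree q \<le> k - 1" by (rule degree_le) (use cq j0 in auto)
    thus ?thesis using j0 by linarith
  qed
  have aq: "appl q s n = (\<Sum>j<k. v $ j * s (n + j))" for s n
    by (simp add: q_def appl_sum_poly appl_monom)
  define t where "t = appl q bo"
  have t0: "t i = 0" if "i < k" for i
  proof -
    have "(?H *\<^sub>v v) $ i = 0" using v(3) that by simp
    moreover have "(?H *\<^sub>v v) $ i = (\<Sum>j = 0..<k. bo (i + j) * v $ j)"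
      using that v(1) by (simp add: mult_mat_vec_def scalar_prod_def)
    ultimately show ?thesis by (simp add: t_def aq atLeast0LessThan mult.commute)
  qed
  have gt: "\<forall>n. appl g t n = 0"
  proof
    fix n
    have "appl g t n = appl q (appl g bo) n" unfolding t_def by (rule appl_comm)
    also have "appl g bo = (\<lambda>n. 0)" using gbo by auto
    finally show "appl g t n = 0" by simp
  qed
  have tz: "t n = 0" for n
  proof -
    have "t (0 + n) = (\<Sum>l<degree g. t (0 + l) * coeff (monom 1 n mod g) l)"
      by (rule rep[OF g1 gt])
    also have "\<dots> = 0" using t0 dg by simp
    finally show ?thesis by simp
  qed
  have "appl (q * h) (\<lambda>n. a (Suc n)) n = 0" for n
  proof -
    have "appl (q * h) (\<lambda>n. a (Suc n)) n = appl (q * h) (\<lambda>n. bo n + bi n) n"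
      using ab by simp
    also have "\<dots> = appl (q * h) bo n + appl (q * h) bi n" by (rule appl_add_seq)
    also have "appl (q * h) bo n = appl h t n" by (simp add: t_def appl_mult[symmetric] mult.commute)
    also have "t = (\<lambda>n. 0)" using tz by auto
    also have "appl (q * h) bi n = appl q (appl h bi) n" by (simp add: appl_mult)
    also have "appl h bi = (\<lambda>n. 0)" using hbi by auto
    finally show ?thesis by simp
  qed
  hence "f dvd q * h" using min_dvd[OF minp] q0 h0 by auto
  hence "g dvd q" using h0 fgh by simp
  hence "degree g \<le> degree q" using q0 by (rule dvd_imp_degree_le)
  thus False using dq dg by simp
qed



lemma lin_pow_props:
  fixes r :: complex
  shows "degree ([:-r,1:]^m) = m" "lead_coeff ([:-r,1:]^m) = 1" "[:-r,1:]^m \<noteq> 0"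
proof -
  show "degree ([:-r,1:]^m) = m" by (simp add: degree_linear_power)
  have "lead_coeff ([:-r,1:]^m) = lead_coeff [:-r,1:] ^ m" by (rule lead_coeff_power)
  thus l: "lead_coeff ([:-r,1:]^m) = 1" by simp
  thus "[:-r,1:]^m \<noteq> 0" by auto
qed

lemma mahler_monic:
  assumes "lead_coeff f = 1"
  shows "mahler_measure f = (\<Prod>r\<in>{r. poly f r = 0}. max (cmod r) 1 ^ order r f)"
  using assms by (simp add: mahler_measure_def)

lemma lrs_structure:
  fixes a :: "nat \<Rightarrow> complex" and f :: "complex poly"
  assumes minp: "minimal_polynomial a f"
  shows "mahler_measure f \<ge> 1 \<and>
    (\<forall>k. \<exists>C\<ge>0. \<exists>E. \<forall>N. cmod (det (mat k k (\<lambda>(i,j). a (Suc N + i + j))))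
         \<le> C * (real N + real k)^E * mahler_measure f ^ N) \<and>
    (mahler_measure f \<noteq> 1 \<longrightarrow> (\<exists>k>0. \<exists>c0>0. \<exists>C2\<ge>0. \<exists>E. \<exists>\<mu>>1. \<forall>N.
        cmod (det (mat k k (\<lambda>(i,j). a (Suc N + i + j))))
         \<ge> c0 * mahler_measure f ^ N - C2 * (real N + real k)^E * (mahler_measure f / \<mu>)^N))"
proof -
  define b where "b = (\<lambda>n. a (Suc n))"
  define R where "R = {r. poly f r = 0}"
  define m where "m = (\<lambda>r. order r f)"
  define q where "q = (\<lambda>r. [:-r,1:]^(m r))"
  define \<rho> where "\<rho> = (\<lambda>r::complex. max (cmod r) 1)"
  define M where "M = mahler_measure f"
  have f1: "lead_coeff f = 1" and fb: "\<forall>n. appl f b n = 0"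
    using minp by (auto simp: minimal_polynomial_def sat_rec_iff b_def)
  have f0: "f \<noteq> 0" using f1 by auto
  have finR: "finite R" unfolding R_def using f0 by (rule poly_roots_finite)
  have fprod: "f = (\<Prod>r\<in>R. q r)"
    using complex_poly_decompose[of f] f1 by (simp add: R_def q_def m_def)
  have M_eq: "M = (\<Prod>r\<in>R. \<rho> r ^ m r)"
    using f1 by (simp add: M_def mahler_measure_def R_def \<rho>_def m_def)
  have \<rho>1: "\<rho> r \<ge> 1" for r by (simp add: \<rho>_def)
  have M1: "M \<ge> 1" unfolding M_eq using \<rho>1 by (intro prod_ge_1) auto
  have q_props: "degree (q r) = m r" "lead_coeff (q r) = 1" "q r \<noteq> 0" for r
    unfolding q_def by (rule lin_pow_props)+
  have cop: "\<forall>r\<in>R. \<forall>r'\<in>R. r \<noteq> r' \<longrightarrow> coprime (q r) (q r')"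
    unfolding q_def using coprime_lin by blast
  obtain comp where comp: "\<forall>r\<in>R. \<forall>n. appl (q r) (comp r) n = 0" "\<forall>n. b n = (\<Sum>r\<in>R. comp r n)"
    using decomp[OF finR cop] fb fprod by metis
  have "\<forall>r\<in>R. \<exists>K\<ge>0. \<forall>n. cmod (comp r n) \<le> K * (real n + 1)^(m r) * \<rho> r ^ n"
    using comp(1) growth unfolding q_def \<rho>_def by blast
  then obtain Kf where Kf: "\<forall>r\<in>R. Kf r \<ge> 0 \<and> (\<forall>n. cmod (comp r n) \<le> Kf r * (real n + 1)^(m r) * \<rho> r ^ n)"
    by metis
  define XX where "XX = (\<lambda>S. Sigma S (\<lambda>r. {..<m r}))"
  define c where "c = (\<lambda>x N. comp (fst x) (N + snd x))"
  define w where "w = (\<lambda>x j. coeff (monom 1 j mod q (fst x)) (snd x))"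
  define D where "D = degree f"
  define X where "X = XX R"
  have finXX: "finite (XX S)" if "S \<subseteq> R" for S
    using that finR finite_subset unfolding XX_def by blast
  have repS: "(\<Sum>r\<in>S. comp r (N + i + j)) = (\<Sum>x\<in>XX S. c x (N + i) * w x j)" if "S \<subseteq> R" for S N i j
  proof -
    have "comp r (N + i + j) = (\<Sum>l<m r. c (r,l) (N + i) * w (r,l) j)" if "r \<in> S" for r
    proof -
      have "comp r ((N + i) + j) = (\<Sum>l<degree (q r). comp r ((N + i) + l) * coeff (monom 1 j mod q r) l)"
        by (rule rep) (use q_props comp(1) \<open>r \<in> S\<close> \<open>S \<subseteq> R\<close> in auto)
      thus ?thesis by (simp add: c_def w_def q_props add.assoc)
    qed
    hence "(\<Sum>r\<in>S. comp r (N + i + j)) = (\<Sum>r\<in>S. \<Sum>l<m r. c (r,l) (N + i) * w (r,l) j)"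
      by simp
    also have "\<dots> = (\<Sum>x\<in>XX S. c x (N + i) * w x j)"
      unfolding XX_def using finR finite_subset that by (subst sum.Sigma) (auto simp: case_prod_beta)
    finally show ?thesis .
  qed
  define K where "K = (\<Sum>x\<in>X. Kf (fst x) * (real (snd x) + 1)^(m (fst x)) * \<rho> (fst x) ^ (snd x))"
  have Kx: "0 \<le> Kf (fst x) * (real (snd x) + 1)^(m (fst x)) * \<rho> (fst x) ^ (snd x)" if "x \<in> X" for x
  proof -
    have "fst x \<in> R" using that by (auto simp: X_def XX_def)
    hence "Kf (fst x) \<ge> 0" using Kf by auto
    moreover have "\<rho> (fst x) \<ge> 0" using \<rho>1[of "fst x"] by linarith
    ultimately show ?thesis by simp
  qed
  have mD: "m r \<le> D" for r using f0 by (simp add: m_def D_def order_degree)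
  have cbound: "\<forall>x\<in>X. \<forall>N. cmod (c x N) \<le> K * (real N + 1)^D * \<rho> (fst x) ^ N"
  proof (intro ballI allI)
    fix x N assume x: "x \<in> X"
    obtain r l where rl: "x = (r,l)" by fastforce
    have r: "r \<in> R" "l < m r" using x by (auto simp: rl X_def XX_def)
    have Kr: "Kf r \<ge> 0" using Kf r by auto
    have "cmod (c x N) = cmod (comp r (N + l))" by (simp add: c_def rl)
    also have "\<dots> \<le> Kf r * (real (N + l) + 1)^(m r) * \<rho> r ^ (N + l)" using Kf r(1) by blast
    also have "\<dots> \<le> Kf r * ((real N + 1) * (real l + 1))^(m r) * \<rho> r ^ (N + l)"
      using Kr \<rho>1[of r] by (intro mult_right_mono mult_left_mono power_mono) (auto simp: algebra_simps)
    also have "\<dots> = (Kf r * (real l + 1)^(m r) * \<rho> r ^ l) * ((real N + 1)^(m r) * \<rho> r ^ N)"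
      by (simp only: power_mult_distrib power_add mult_ac)
    also have "\<dots> \<le> K * ((real N + 1)^D * \<rho> r ^ N)"
    proof (rule mult_mono)
      show "Kf r * (real l + 1)^(m r) * \<rho> r ^ l \<le> K"
      proof -
        have "Kf (fst x) * (real (snd x) + 1)^(m (fst x)) * \<rho> (fst x) ^ (snd x) \<le> K"
          unfolding K_def by (rule member_le_sum[OF x]) (use Kx finXX[of R] in \<open>auto simp: X_def\<close>)
        thus ?thesis by (simp add: rl)
      qed
      show "(real N + 1)^(m r) * \<rho> r ^ N \<le> (real N + 1)^D * \<rho> r ^ N"
        using mD[of r] \<rho>1[of r] by (intro mult_right_mono power_increasing) auto
      show "0 \<le> K" unfolding K_def using Kx by (intro sum_nonneg) auto
      show "0 \<le> (real N + 1)^(m r) * \<rho> r ^ N" using \<rho>1[of r] by simp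
    qed
    finally show "cmod (c x N) \<le> K * (real N + 1)^D * \<rho> (fst x) ^ N" by (simp add: rl)
  qed
  have K0: "K \<ge> 0" unfolding K_def using Kx by (intro sum_nonneg) auto
  have prodXX: "(\<Prod>x\<in>XX S. \<rho> (fst x)) = (\<Prod>r\<in>S. \<rho> r ^ m r)" if "S \<subseteq> R" for S
  proof -
    have "(\<Prod>x\<in>XX S. \<rho> (fst x)) = (\<Prod>r\<in>S. \<Prod>l<m r. \<rho> r)"
      unfolding XX_def using finR finite_subset that by (subst prod.Sigma) (auto simp: case_prod_beta)
    thus ?thesis by simp
  qed
  have MX: "M = (\<Prod>x\<in>X. \<rho> (fst x))" using prodXX[of R] M_eq by (simp add: X_def)
  have \<rho>M: "\<rho> (fst x) \<le> M" if "x \<in> X" for x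
  proof -
    have "(\<Prod>x\<in>{x}. \<rho> (fst x)) \<le> (\<Prod>x\<in>X. \<rho> (fst x))"
      using that finXX[of R] \<rho>1 by (intro prod_le_total) (auto simp: X_def)
    thus ?thesis using MX by simp
  qed
  have brep: "b (N + i + j) = (\<Sum>x\<in>X. c x (N + i) * w x j)" for N i j
    using comp(2) repS[of R N i j] by (simp add: X_def)
  have hb: "mat k k (\<lambda>(i,j). a (Suc N + i + j)) = mat k k (\<lambda>(i,j). b (N + i + j))" for k N
    by (simp add: b_def)
  have upper: "\<exists>C\<ge>0. \<exists>E. \<forall>N. cmod (det (mat k k (\<lambda>(i,j). a (Suc N + i + j))))
         \<le> C * (real N + real k)^E * M ^ N" for k
  proof -
    define Wt where "Wt = (\<Sum>\<tau>\<in>{0..<k} \<rightarrow>\<^sub>E X. cmod (det (mat k k (\<lambda>(i,j). w (\<tau> i) j))))"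
    have Wt0: "Wt \<ge> 0" unfolding Wt_def by (intro sum_nonneg) auto
    have "cmod (det (mat k k (\<lambda>(i,j). a (Suc N + i + j)))) \<le> ((K * M^k)^k * Wt) * (real N + real k)^(D*k) * M ^ N" for N
    proof -
      have "det (mat k k (\<lambda>(i,j). a (Suc N + i + j))) =
        (\<Sum>\<tau>\<in>{0..<k} \<rightarrow>\<^sub>E X. (\<Prod>i=0..<k. c (\<tau> i) (N + i)) * det (mat k k (\<lambda>(i,j). w (\<tau> i) j)))"
        unfolding hb by (rule hankel_rep) (use finXX[of R] brep in \<open>auto simp: X_def\<close>)
      also have "cmod \<dots> \<le> (K * M^k)^k * (real N + real k)^(D*k) * M^N * Wt"
        unfolding Wt_def
      proof (rule det_bound[where \<rho>="\<lambda>x. \<rho> (fst x)"])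
        show "finite X" using finXX[of R] by (simp add: X_def)
        show "\<forall>\<tau>\<in>{0..<k} \<rightarrow>\<^sub>E X. inj_on \<tau> {0..<k} \<longrightarrow> (\<Prod>i = 0..<k. \<rho> (fst (\<tau> i))) \<le> M"
          using MX prod_inj_le[of X _ k "\<lambda>x. \<rho> (fst x)"] finXX[of R] \<rho>1 by (auto simp: X_def)
      qed (use K0 cbound \<rho>1 \<rho>M M1 in auto)
      finally show ?thesis by (simp add: algebra_simps)
    qed
    moreover have "(K * M^k)^k * Wt \<ge> 0" using K0 M1 Wt0 by simp
    ultimately show ?thesis by blast
  qed
  have lower: "\<exists>k>0. \<exists>c0>0. \<exists>C2\<ge>0. \<exists>E. \<exists>\<mu>>1. \<forall>N.
        cmod (det (mat k k (\<lambda>(i,j). a (Suc N + i + j))))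
         \<ge> c0 * M ^ N - C2 * (real N + real k)^E * (M / \<mu>)^N" if M1': "M \<noteq> 1"
  proof -
    define Ro where "Ro = {r\<in>R. cmod r > 1}"
    have RoR: "Ro \<subseteq> R" by (auto simp: Ro_def)
    have finRo: "finite Ro" using finR RoR finite_subset by blast
    have \<rho>in: "\<rho> r = 1" if "r \<in> R - Ro" for r using that by (auto simp: Ro_def \<rho>_def)
    have \<rho>out: "\<rho> r = cmod r" if "r \<in> Ro" for r using that by (auto simp: Ro_def \<rho>_def)
    have MRo: "M = (\<Prod>r\<in>Ro. \<rho> r ^ m r)"
    proof -
      have "M = (\<Prod>r\<in>R - Ro. \<rho> r ^ m r) * (\<Prod>r\<in>Ro. \<rho> r ^ m r)"
        unfolding M_eq using RoR finR by (rule prod.subset_diff)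
      also have "(\<Prod>r\<in>R - Ro. \<rho> r ^ m r) = 1" using \<rho>in by simp
      finally show ?thesis by simp
    qed
    have Ro_ne: "Ro \<noteq> {}"
    proof
      assume "Ro = {}" hence "M = 1" using MRo by simp
      thus False using M1' by simp
    qed
    define Xo where "Xo = XX Ro"
    define k where "k = card Xo"
    have XoX: "Xo \<subseteq> X" using RoR by (auto simp: Xo_def X_def XX_def)
    have finX: "finite X" using finXX[of R] by (simp add: X_def)
    have finXo: "finite Xo" using finXX[OF RoR] by (simp add: Xo_def)
    have mpos: "m r > 0" if "r \<in> R" for r
      using that f0 by (auto simp: R_def m_def order_root)
    have k0: "k > 0"
    proof -
      obtain r where "r \<in> Ro" using Ro_ne by auto
      hence "(r, 0) \<in> Xo" using mpos RoR by (auto simp: Xo_def XX_def)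
      thus ?thesis using finXo by (auto simp: k_def card_gt_0_iff)
    qed
    define g where "g = (\<Prod>r\<in>Ro. q r)"
    define h where "h = (\<Prod>r\<in>R - Ro. q r)"
    have fgh: "f = g * h"
    proof -
      have "f = h * g" unfolding fprod g_def h_def using RoR finR by (rule prod.subset_diff)
      thus ?thesis by (simp add: mult.commute)
    qed
    have g1: "lead_coeff g = 1"
    proof -
      have "lead_coeff g = (\<Prod>r\<in>Ro. lead_coeff (q r))" by (simp only: g_def lead_coeff_prod)
      also have "\<dots> = 1" by (rule prod.neutral) (use q_props(2) in blast)
      finally show ?thesis .
    qed
    have h0: "h \<noteq> 0" using finR by (simp add: h_def q_props)
    have dg: "degree g = k"
    proof -
      have "degree g = (\<Sum>r\<in>Ro. m r)" by (simp add: g_def degree_prod_eq_sum_degree q_props)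
      also have "\<dots> = card Xo" unfolding Xo_def XX_def using finRo by (simp add: card_SigmaI)
      finally show ?thesis by (simp add: k_def)
    qed
    define bo where "bo = (\<lambda>n. \<Sum>r\<in>Ro. comp r n)"
    define bi where "bi = (\<lambda>n. \<Sum>r\<in>R - Ro. comp r n)"
    have gbo: "\<forall>n. appl g bo n = 0"
    proof
      fix n
      have "appl g bo n = (\<Sum>r\<in>Ro. appl g (comp r) n)" by (simp add: bo_def appl_sum_seq)
      also have "\<dots> = 0"
      proof (intro sum.neutral ballI)
        fix r assume r: "r \<in> Ro"
        show "appl g (comp r) n = 0"
          by (rule appl_dvd_zero[of "q r"]) (use r finRo comp(1) RoR in \<open>auto simp: g_def intro: dvd_prodI\<close>)
      qed
      finally show "appl g bo n = 0" .
    qed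
    have hbi: "\<forall>n. appl h bi n = 0"
    proof
      fix n
      have "appl h bi n = (\<Sum>r\<in>R - Ro. appl h (comp r) n)" by (simp add: bi_def appl_sum_seq)
      also have "\<dots> = 0"
      proof (intro sum.neutral ballI)
        fix r assume r: "r \<in> R - Ro"
        show "appl h (comp r) n = 0"
          by (rule appl_dvd_zero[of "q r"]) (use r finR comp(1) in \<open>auto simp: h_def intro: dvd_prodI\<close>)
      qed
      finally show "appl h bi n = 0" .
    qed
    have ab: "\<forall>n. a (Suc n) = bo n + bi n"
    proof
      fix n
      have "a (Suc n) = (\<Sum>r\<in>R. comp r n)" using comp(2) by (simp add: b_def)
      also have "\<dots> = bi n + bo n" unfolding bo_def bi_def using RoR finR by (rule sum.subset_diff)
      finally show "a (Suc n) = bo n + bi n" by simp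
    qed
    have nz: "det (mat k k (\<lambda>(i,j). bo (i + j))) \<noteq> 0"
      by (rule hankel0_nonzero[OF minp fgh g1 dg gbo hbi ab h0])
    define c0 where "c0 = cmod (det (mat k k (\<lambda>(i,j). bo (i + j))))"
    have c0: "c0 > 0" using nz by (simp add: c0_def)
    have cg: "cmod (coeff g 0) = M"
    proof -
      have "coeff g 0 = poly g 0" by (simp add: poly_0_coeff_0)
      also have "\<dots> = (\<Prod>r\<in>Ro. (- r) ^ m r)" by (simp add: g_def q_def poly_prod)
      finally have "cmod (coeff g 0) = (\<Prod>r\<in>Ro. cmod r ^ m r)"
        by (simp add: prod_norm[symmetric] norm_power)
      also have "\<dots> = (\<Prod>r\<in>Ro. \<rho> r ^ m r)" using \<rho>out by simp
      finally show ?thesis using MRo by simp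
    qed
    have bo_pow: "cmod (det (mat k k (\<lambda>(i,j). bo (N + i + j)))) = c0 * M ^ N" for N
      using hankel_det_power[OF g1 dg gbo k0, of N] cg by (simp add: c0_def)
    define \<mu> where "\<mu> = Min (cmod ` Ro)"
    have \<mu>: "\<mu> > 1" "\<forall>r\<in>Ro. cmod r \<ge> \<mu>"
    proof -
      have "\<mu> \<in> cmod ` Ro" unfolding \<mu>_def using finRo Ro_ne by (intro Min_in) auto
      thus "\<mu> > 1" by (auto simp: Ro_def)
      show "\<forall>r\<in>Ro. cmod r \<ge> \<mu>" unfolding \<mu>_def using finRo by auto
    qed
    have MXo: "(\<Prod>x\<in>Xo. \<rho> (fst x)) = M" using prodXX[OF RoR] MRo by (simp add: Xo_def)
    have borep: "bo (N + i + j) = (\<Sum>x\<in>Xo. c x (N + i) * w x j)" for N i j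
      using repS[OF RoR, of N i j] by (simp add: bo_def Xo_def)
    define Y where "Y = ({0..<k} \<rightarrow>\<^sub>E X) - ({0..<k} \<rightarrow>\<^sub>E Xo)"
    define Wt where "Wt = (\<Sum>\<tau>\<in>{0..<k} \<rightarrow>\<^sub>E X. cmod (det (mat k k (\<lambda>(i,j). w (\<tau> i) j))))"
    have Wt0: "Wt \<ge> 0" unfolding Wt_def by (intro sum_nonneg) auto
    define C2 where "C2 = (K * M^k)^k * Wt"
    have C20: "C2 \<ge> 0" using K0 M1 Wt0 by (simp add: C2_def)
    have "cmod (det (mat k k (\<lambda>(i,j). a (Suc N + i + j))))
         \<ge> c0 * M ^ N - C2 * (real N + real k)^(D*k) * (M / \<mu>)^N" for N
    proof -
      define T where "T = (\<lambda>\<tau>. (\<Prod>i=0..<k. c (\<tau> i) (N + i)) * det (mat k k (\<lambda>(i,j). w (\<tau> i) j)))"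
      have PiEsub: "({0..<k} \<rightarrow>\<^sub>E Xo) \<subseteq> ({0..<k} \<rightarrow>\<^sub>E X)" using XoX by (rule PiE_mono)
      have finP: "finite ({0..<k} \<rightarrow>\<^sub>E X)" using finX by (simp add: finite_PiE)
      have "det (mat k k (\<lambda>(i,j). a (Suc N + i + j))) = (\<Sum>\<tau>\<in>{0..<k} \<rightarrow>\<^sub>E X. T \<tau>)"
        unfolding hb T_def by (rule hankel_rep) (use finX brep in auto)
      also have "\<dots> = (\<Sum>\<tau>\<in>Y. T \<tau>) + (\<Sum>\<tau>\<in>{0..<k} \<rightarrow>\<^sub>E Xo. T \<tau>)"
        unfolding Y_def using PiEsub finP by (rule sum.subset_diff)
      also have "(\<Sum>\<tau>\<in>{0..<k} \<rightarrow>\<^sub>E Xo. T \<tau>) = det (mat k k (\<lambda>(i,j). bo (N + i + j)))"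
        unfolding T_def by (rule hankel_rep[symmetric]) (use finXo borep in auto)
      finally have dec: "det (mat k k (\<lambda>(i,j). a (Suc N + i + j))) =
          (\<Sum>\<tau>\<in>Y. T \<tau>) + det (mat k k (\<lambda>(i,j). bo (N + i + j)))" .
      have rest: "cmod (\<Sum>\<tau>\<in>Y. T \<tau>) \<le> C2 * (real N + real k)^(D*k) * (M / \<mu>)^N"
      proof -
        have "cmod (\<Sum>\<tau>\<in>Y. T \<tau>) \<le> (K * M^k)^k * (real N + real k)^(D*k) * (M / \<mu>)^N * Wt"
          unfolding T_def Wt_def
        proof (rule det_bound[where \<rho>="\<lambda>x. \<rho> (fst x)"])
          show "\<forall>\<tau>\<in>Y. inj_on \<tau> {0..<k} \<longrightarrow> (\<Prod>i = 0..<k. \<rho> (fst (\<tau> i))) \<le> M / \<mu>"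
          proof (intro ballI impI)
            fix \<tau> assume \<tau>: "\<tau> \<in> Y" and inj: "inj_on \<tau> {0..<k}"
            have "\<mu> * (\<Prod>i = 0..<k. \<rho> (fst (\<tau> i))) \<le> (\<Prod>x\<in>Xo. \<rho> (fst x))"
            proof (rule prod_inj_le_strict[OF finX XoX _ inj])
              show "\<tau> \<in> {0..<k} \<rightarrow>\<^sub>E X" "\<tau> \<notin> {0..<k} \<rightarrow>\<^sub>E Xo" using \<tau> by (auto simp: Y_def)
              show "\<forall>x\<in>X - Xo. \<rho> (fst x) = 1"
              proof
                fix x assume x: "x \<in> X - Xo"
                hence "fst x \<in> R - Ro" by (cases x) (auto simp: X_def Xo_def XX_def)
                thus "\<rho> (fst x) = 1" by (rule \<rho>in)
              qed
              show "\<forall>x\<in>Xo. \<mu> \<le> \<rho> (fst x)"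
                using \<mu>(2) \<rho>out by (auto simp: Xo_def XX_def)
              show "1 \<le> \<mu>" using \<mu>(1) by simp
              show "card Xo = k" by (simp add: k_def)
            qed
            thus "(\<Prod>i = 0..<k. \<rho> (fst (\<tau> i))) \<le> M / \<mu>"
              using MXo \<mu>(1) by (simp add: pos_le_divide_eq mult.commute)
          qed
          show "Y \<subseteq> {0..<k} \<rightarrow>\<^sub>E X" by (auto simp: Y_def)
        qed (use finX K0 cbound \<rho>1 \<rho>M M1 \<mu>(1) in auto)
        thus ?thesis by (simp add: C2_def algebra_simps)
      qed
      have "c0 * M ^ N = cmod (det (mat k k (\<lambda>(i,j). bo (N + i + j))))" by (simp add: bo_pow)
      also have "\<dots> \<le> cmod (det (mat k k (\<lambda>(i,j). a (Suc N + i + j)))) + cmod (\<Sum>\<tau>\<in>Y. T \<tau>)"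
      proof -
        have "det (mat k k (\<lambda>(i,j). bo (N + i + j))) = det (mat k k (\<lambda>(i,j). a (Suc N + i + j))) - (\<Sum>\<tau>\<in>Y. T \<tau>)"
          using dec by simp
        thus ?thesis by (metis norm_triangle_ineq4)
      qed
      finally show ?thesis using rest by linarith
    qed
    thus ?thesis using k0 c0 C20 \<mu>(1) by blast
  qed
  show ?thesis using M1 upper lower by (simp add: M_def)
qed



lemma lim_aux1:
  fixes C :: real and k E :: nat
  assumes "C > 0"
  shows "(\<lambda>n::nat. C powr (1 / real n) * (real n + real k) powr (real E / real n)) \<longlonglongrightarrow> 1"
  using assms by real_asymp

lemma lim_aux2:
  fixes \<mu> :: real and k E :: nat
  assumes "\<mu> > 1"
  shows "(\<lambda>n::nat. (real n + real k) powr real E / \<mu> powr real n) \<longlonglongrightarrow> 0"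
  using assms by real_asymp

lemma powr_aux:
  fixes C M y :: real and E n :: nat
  assumes "C > 0" "M > 0" "y > 0" "n > 0"
  shows "(C * y ^ E * M ^ n) powr (1 / real n) = C powr (1 / real n) * y powr (real E / real n) * M"
proof -
  have "(C * y ^ E * M ^ n) powr (1 / real n) = C powr (1 / real n) * (y ^ E) powr (1 / real n) * (M ^ n) powr (1 / real n)"
    using assms by (simp add: powr_mult)
  also have "(y ^ E) powr (1 / real n) = y powr (real E / real n)"
    using assms by (simp add: powr_realpow[symmetric] powr_powr)
  also have "(M ^ n) powr (1 / real n) = M"
    using assms by (simp add: powr_realpow[symmetric] powr_powr)
  finally show ?thesis .
qed

lemma upper_fun_lim:
  fixes C M :: real and k E :: nat
  assumes "C > 0" "M > 0"
  shows "(\<lambda>n. (C * (real n + real k) ^ E * M ^ n) powr (1 / real n)) \<longlonglongrightarrow> M"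
proof -
  have "(\<lambda>n::nat. C powr (1 / real n) * (real n + real k) powr (real E / real n) * M) \<longlonglongrightarrow> 1 * M"
    by (intro tendsto_mult_right lim_aux1 assms)
  moreover have "eventually (\<lambda>n. C powr (1 / real n) * (real n + real k) powr (real E / real n) * M =
      (C * (real n + real k) ^ E * M ^ n) powr (1 / real n)) sequentially"
    using eventually_ge_at_top[of "1::nat"]
    by eventually_elim (subst powr_aux, use assms in auto)
  ultimately show ?thesis by (simp add: tendsto_cong)
qed

lemma upper_lim:
  fixes x :: "nat \<Rightarrow> real" and C M :: real and k E :: nat
  assumes "C > 0" "M \<ge> 1" "\<forall>n\<ge>1. 0 \<le> x n \<and> x n \<le> C * (real n + real k)^E * M^n"
  shows "limsup (\<lambda>n. ereal (x n powr (1 / real n))) \<le> ereal M"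
proof -
  let ?u = "\<lambda>n. (C * (real n + real k) ^ E * M ^ n) powr (1 / real n)"
  have "limsup (\<lambda>n. ereal (x n powr (1 / real n))) \<le> limsup (\<lambda>n. ereal (?u n))"
  proof (rule Limsup_mono)
    show "eventually (\<lambda>n. ereal (x n powr (1 / real n)) \<le> ereal (?u n)) sequentially"
      using eventually_ge_at_top[of "1::nat"]
      by eventually_elim (use assms in \<open>auto intro!: powr_mono2\<close>)
  qed
  also have "limsup (\<lambda>n. ereal (?u n)) = ereal M"
    by (rule lim_imp_Limsup) (use assms in \<open>auto intro!: tendsto_ereal upper_fun_lim\<close>)
  finally show ?thesis .
qed

lemma exact_lim:
  fixes x :: "nat \<Rightarrow> real" and c C C' M \<mu> :: real and k E E' :: nat
  assumes "c > 0" "C \<ge> 0" "\<mu> > 1" "M \<ge> 1" "C' > 0"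
    "\<forall>n\<ge>1. 0 \<le> x n \<and> x n \<le> C' * (real n + real k)^E * M^n"
    "\<forall>n\<ge>1. x n \<ge> c * M^n - C * (real n + real k)^E' * (M / \<mu>)^n"
  shows "(\<lambda>n. x n powr (1 / real n)) \<longlonglongrightarrow> M"
proof -
  let ?u = "\<lambda>n. (C' * (real n + real k) ^ E * M ^ n) powr (1 / real n)"
  let ?l = "\<lambda>n. ((c / 2) * (real n + real k) ^ 0 * M ^ n) powr (1 / real n)"
  have L1: "?u \<longlonglongrightarrow> M" using assms by (intro upper_fun_lim) auto
  have L2: "?l \<longlonglongrightarrow> M" using assms by (intro upper_fun_lim) auto
  have E1: "eventually (\<lambda>n. x n powr (1 / real n) \<le> ?u n) sequentially"
    using eventually_ge_at_top[of "1::nat"]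
    by eventually_elim (use assms in \<open>auto intro!: powr_mono2\<close>)
  have "eventually (\<lambda>n. (real n + real k) powr real E' / \<mu> powr real n < c / (2 * (C + 1))) sequentially"
    using lim_aux2[OF assms(3), of k E'] assms(1,2)
    by (intro order_tendstoD(2)) auto
  hence E2: "eventually (\<lambda>n. ?l n \<le> x n powr (1 / real n)) sequentially"
    using eventually_ge_at_top[of "1::nat"]
  proof eventually_elim
    case (elim n)
    have n1: "real n + real k > 0" using elim(2) by simp
    have M0: "M > 0" using assms(4) by simp
    have "(real n + real k) ^ E' / \<mu> ^ n < c / (2 * (C + 1))"
      using elim(1) n1 assms(3) by (simp add: powr_realpow)
    hence "(real n + real k) ^ E' < c / (2 * (C + 1)) * \<mu> ^ n"
      using assms(3) by (simp add: divide_less_eq)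
    hence "C * (real n + real k) ^ E' \<le> C * (c / (2 * (C + 1)) * \<mu> ^ n)"
      using assms(2) by (intro mult_left_mono) auto
    also have "\<dots> \<le> c / 2 * \<mu> ^ n"
    proof -
      have "C * (c / (2 * (C + 1))) \<le> c / 2"
        using assms(1,2) by (simp add: field_simps)
      moreover have "(0::real) \<le> \<mu> ^ n" using assms(3) by simp
      ultimately have "(C * (c / (2 * (C + 1)))) * \<mu> ^ n \<le> c / 2 * \<mu> ^ n"
        by (rule mult_right_mono)
      thus ?thesis by (simp only: mult.assoc)
    qed
    finally have h: "C * (real n + real k) ^ E' \<le> c / 2 * \<mu> ^ n" .
    have "C * (real n + real k) ^ E' * (M / \<mu>) ^ n = C * (real n + real k) ^ E' / \<mu> ^ n * M ^ n"
      by (simp add: power_divide)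
    also have "\<dots> \<le> c / 2 * M ^ n"
      using h assms(3) M0 by (intro mult_right_mono) (auto simp: divide_le_eq)
    finally have "x n \<ge> c / 2 * M ^ n" using assms(7) elim(2) by force
    thus ?case using assms(1) M0 by (intro powr_mono2) auto
  qed
  show ?thesis by (rule tendsto_sandwich[OF E2 E1 L2 L1])
qed



lemma shift_up:
  fixes C M :: real
  assumes "M \<ge> 1" "C \<ge> 0"
  shows "C * (real N + real k)^E * M^N \<le> (C + 1) * (real (Suc N) + real k)^E * M^(Suc N)"
proof -
  have "(real N + real k)^E \<le> (real (Suc N) + real k)^E" by (intro power_mono) auto
  moreover have "M^N \<le> M^(Suc N)" using assms(1) by (intro power_increasing) auto
  ultimately show ?thesis using assms by (intro mult_mono) auto
qed

lemma shift_low: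
  fixes C2 M c0 \<mu> :: real
  assumes "M \<ge> 1" "\<mu> > 1" "C2 \<ge> 0"
  shows "c0 * M^N - C2 * (real N + real k)^E * (M / \<mu>)^N \<ge>
    (c0 / M) * M^(Suc N) - (C2 * \<mu>) * (real (Suc N) + real k)^E * (M / \<mu>)^(Suc N)"
proof -
  have M0: "M > 0" using assms by simp
  have e1: "c0 * M^N = (c0 / M) * M^(Suc N)" using M0 by simp
  have "(M / \<mu>)^N = (M / \<mu>)^(Suc N) * (\<mu> / M)" using M0 assms(2) by (simp add: field_simps)
  also have "\<dots> \<le> (M / \<mu>)^(Suc N) * \<mu>"
    using M0 assms by (intro mult_left_mono) (auto simp: divide_le_eq)
  finally have e2: "(M / \<mu>)^N \<le> \<mu> * (M / \<mu>)^(Suc N)" by simp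
  have e3: "(real N + real k)^E \<le> (real (Suc N) + real k)^E" by (intro power_mono) auto
  have "C2 * (real N + real k)^E * (M / \<mu>)^N \<le> C2 * (real (Suc N) + real k)^E * (\<mu> * (M / \<mu>)^(Suc N))"
    using e2 e3 assms M0 by (intro mult_mono) auto
  moreover have "C2 * (real (Suc N) + real k)^E * (\<mu> * (M / \<mu>)^(Suc N)) =
      (C2 * \<mu>) * (real (Suc N) + real k)^E * (M / \<mu>)^(Suc N)" by (simp only: mult_ac)
  ultimately show ?thesis using e1 by linarith
qed

theorem proposition2p2:
  fixes a :: "nat \<Rightarrow> complex" and f :: "complex poly"
  assumes "linearly_recurrent a"
    and "minimal_polynomial a f"
  shows "(\<forall>k. growth_rate k a \<le> ereal (mahler_measure f)) \<and>
         (\<exists>k. growth_rate k a = ereal (mahler_measure f))"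
proof -
  define M where "M = mahler_measure f"
  note S = lrs_structure[OF assms(2), folded M_def]
  have M1: "M \<ge> 1" using S by simp
  have hk: "hankel a (Suc N) k = mat k k (\<lambda>(i,j). a (Suc N + i + j))" for N k
    by (simp add: hankel_def)
  have ub: "\<exists>C>0. \<exists>E. \<forall>n\<ge>1. 0 \<le> cmod (det (hankel a n k)) \<and>
      cmod (det (hankel a n k)) \<le> C * (real n + real k)^E * M^n" for k
  proof -
    obtain C E where CE: "C \<ge> 0" "\<forall>N. cmod (det (mat k k (\<lambda>(i,j). a (Suc N + i + j))))
         \<le> C * (real N + real k)^E * M ^ N"
      using S by blast
    have "\<forall>n\<ge>1. 0 \<le> cmod (det (hankel a n k)) \<and>
      cmod (det (hankel a n k)) \<le> (C + 1) * (real n + real k)^E * M^n"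
    proof (intro allI impI conjI)
      fix n :: nat assume "n \<ge> 1"
      then obtain N where N: "n = Suc N" by (cases n) auto
      show "0 \<le> cmod (det (hankel a n k))" by simp
      have "cmod (det (hankel a n k)) \<le> C * (real N + real k)^E * M ^ N"
        using CE(2) by (simp add: N hk)
      also have "\<dots> \<le> (C + 1) * (real n + real k)^E * M^n"
        unfolding N using M1 CE(1) by (rule shift_up)
      finally show "cmod (det (hankel a n k)) \<le> (C + 1) * (real n + real k)^E * M^n" .
    qed
    moreover have "C + 1 > 0" using CE by simp
    ultimately show ?thesis by blast
  qed
  have gr: "growth_rate k a = limsup (\<lambda>n. ereal (cmod (det (hankel a n k)) powr (1 / real n)))"
    if "k > 0" for k
    using that by (simp add: growth_rate_def)
  have part1: "growth_rate k a \<le> ereal M" for k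
  proof (cases "k = 0")
    case True
    thus ?thesis using M1 by (simp add: growth_rate_def)
  next
    case False
    obtain C E where CE: "C > 0" "\<forall>n\<ge>1. 0 \<le> cmod (det (hankel a n k)) \<and>
      cmod (det (hankel a n k)) \<le> C * (real n + real k)^E * M^n"
      using ub by blast
    show ?thesis unfolding gr[OF \<open>k \<noteq> 0\<close>[unfolded neq0_conv]]
      by (rule upper_lim[OF CE(1) M1 CE(2)])
  qed
  have part2: "\<exists>k. growth_rate k a = ereal M"
  proof (cases "M = 1")
    case True
    thus ?thesis by (intro exI[of _ 0]) (simp add: growth_rate_def)
  next
    case False
    then obtain k c0 C2 E \<mu> where L: "k > 0" "c0 > 0" "C2 \<ge> 0" "\<mu> > 1"
      "\<forall>N. cmod (det (mat k k (\<lambda>(i,j). a (Suc N + i + j))))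
         \<ge> c0 * M ^ N - C2 * (real N + real k)^E * (M / \<mu>)^N"
      using S by blast
    obtain C E' where CE: "C > 0" "\<forall>n\<ge>1. 0 \<le> cmod (det (hankel a n k)) \<and>
      cmod (det (hankel a n k)) \<le> C * (real n + real k)^E' * M^n"
      using ub by blast
    have low: "\<forall>n\<ge>1. cmod (det (hankel a n k)) \<ge>
        (c0 / M) * M^n - (C2 * \<mu>) * (real n + real k)^E * (M / \<mu>)^n"
    proof (intro allI impI)
      fix n :: nat assume "n \<ge> 1"
      then obtain N where N: "n = Suc N" by (cases n) auto
      have "(c0 / M) * M^n - (C2 * \<mu>) * (real n + real k)^E * (M / \<mu>)^n
          \<le> c0 * M ^ N - C2 * (real N + real k)^E * (M / \<mu>)^N"
        unfolding N using M1 L(4) L(3) by (rule shift_low)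
      also have "\<dots> \<le> cmod (det (hankel a n k))" using L(5) by (simp add: N hk)
      finally show "cmod (det (hankel a n k)) \<ge> (c0 / M) * M^n - (C2 * \<mu>) * (real n + real k)^E * (M / \<mu>)^n" .
    qed
    have lim: "(\<lambda>n. cmod (det (hankel a n k)) powr (1 / real n)) \<longlonglongrightarrow> M"
    proof (rule exact_lim[OF _ _ L(4) M1 CE(1) CE(2) low])
      show "c0 / M > 0" using L(2) M1 by simp
      show "C2 * \<mu> \<ge> 0" using L(3,4) by simp
    qed
    have "growth_rate k a = ereal M"
      unfolding gr[OF L(1)] by (rule lim_imp_Limsup) (auto intro!: tendsto_ereal lim)
    thus ?thesis by blast
  qed
  show ?thesis using part1 part2 by (simp add: M_def)
qed

end
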